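(* Let $A$ be any randomized algorithm which, on input a continuous proper scoring rule $s$ with convex exposure on an $n$-outcome forecast domain $\mathcal{D}$ and expert forecasts $\mathbf{p}_1,\dots,\mathbf{p}_m\in\mathcal{D}$, outputs a weight vector $\mathbf{w}\in\Delta^m$. Fix any such input and let $\hat{\mathbf{w}}=\mathbb{E}_A[\mathbf{w}]$. Then for every $j\in[n]$, \[s(\mathbf{p}^*_{\hat{\mathbf{w}}};j)\ge\mathbb{E}_A\big[s(\mathbf{p}^*_{\mathbf{w}};j)\big],\] where for $\mathbf{x}\in\Delta^m$, $\mathbf{p}^*_{\mathbf{x}}$ denotes the quasi-arithmetic pool of $\mathbf{p}_1,\dots,\mathbf{p}_m$ with weight vector $\mathbf{x}$ with respect to the exposure function of $s$.
   Context: $\Delta^k$ is the standard simplex in $\mathbb{R}^k$. An $n$-outcome forecast domain is a convex $(n-1)$-dimensional subset of $\Delta^n$. A proper scoring rule on $\mathcal{D}$ is $s:\mathcal{D}\times[n]\to\mathbb{R}$ with $\sum_j p(j)s(\mathbf{p};j)\ge\sum_j p(j)s(\mathbf{x};j)$ for all $\mathbf{p},\mathbf{x}\in\mathcal{D}$, equality only if $\mathbf{x}=\mathbf{p}$. $G(\mathbf{p}):=\sum_j p(j)s(\mathbf{p};j)$ is differentiable and strictly convex; the exposure function is $\mathbf{g}=\nabla G$ (values modulo translation by the all-ones vector). Convex exposure: range of $\mathbf{g}$ is convex. The QA pool with weights $\mathbf{x}$ is the unique $\mathbf{p}^*_{\mathbf{x}}\in\mathcal{D}$ with $\mathbf{g}(\mathbf{p}^*_{\mathbf{x}})=\sum_i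 x_i\mathbf{g}(\mathbf{p}_i)$ (modulo the all-ones vector). *)

theory Defs
  imports "HOL-Analysis.Analysis" "HOL-Probability.Probability"
begin

text \<open>Outcomes are indexed by a finite type 'n (so n = CARD('n)); experts by a finite type 'm.\<close>

definition prob_simplex :: "(real^'k) set" where
  "prob_simplex = {x. (\<forall>i. 0 \<le> x $ i) \<and> (\<Sum>i\<in>UNIV. x $ i) = 1}"

definition ones_vec :: "real^'k" where
  "ones_vec = (\<chi> i. 1)"

definition forecast_domain :: "(real^'n) set \<Rightarrow> bool" where
  "forecast_domain D \<longleftrightarrow> D \<subseteq> prob_simplex \<and> convex D \<and> aff_dim D = int CARD('n) - 1"

definition expected_score :: "(real^'n \<Rightarrow> 'n \<Rightarrow> real) \<Rightarrow> real^'n \<Rightarrow> real^'n \<Rightarrow> real" where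
  "expected_score s p x = (\<Sum>j\<in>UNIV. p $ j * s x j)"

definition proper_scoring_rule :: "(real^'n) set \<Rightarrow> (real^'n \<Rightarrow> 'n \<Rightarrow> real) \<Rightarrow> bool" where
  "proper_scoring_rule D s \<longleftrightarrow>
     (\<forall>p\<in>D. \<forall>x\<in>D. expected_score s p p \<ge> expected_score s p x
        \<and> (expected_score s p p = expected_score s p x \<longrightarrow> x = p))"

definition score_G :: "(real^'n \<Rightarrow> 'n \<Rightarrow> real) \<Rightarrow> real^'n \<Rightarrow> real" where
  "score_G s p = expected_score s p p"

definition strictly_convex_on :: "'a::real_vector set \<Rightarrow> ('a \<Rightarrow> real) \<Rightarrow> bool" where
  "strictly_convex_on S f \<longleftrightarrow>
     (\<forall>x\<in>S. \<forall>y\<in>S. \<forall>t::real. x \<noteq> y \<and> 0 < t \<and> t < 1 \<longrightarrow>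
        f ((1 - t) *\<^sub>R x + t *\<^sub>R y) < (1 - t) * f x + t * f y)"

text \<open>g is an exposure function of s on D: G is differentiable (relative to D) and strictly convex,
  and g(p) is its gradient at p. Since D lies in the hyperplane sum = 1, g is determined only
  modulo translation by the all-ones_vec vector.\<close>
definition is_exposure :: "(real^'n) set \<Rightarrow> (real^'n \<Rightarrow> 'n \<Rightarrow> real) \<Rightarrow> (real^'n \<Rightarrow> real^'n) \<Rightarrow> bool" where
  "is_exposure D s g \<longleftrightarrow>
     strictly_convex_on D (score_G s) \<and>
     (\<forall>p\<in>D. (score_G s has_derivative (\<lambda>h. g p \<bullet> h)) (at p within D))"

definition convex_exposure :: "(real^'n) set \<Rightarrow> (real^'n \<Rightarrow> real^'n) \<Rightarrow> bool" where
  "convex_exposure D g \<longleftrightarrow> convex {g p + c *\<^sub>R ones_vec | p c. p \<in> D}"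

definition qa_pool :: "(real^'n) set \<Rightarrow> (real^'n \<Rightarrow> real^'n) \<Rightarrow> ('m::finite \<Rightarrow> real^'n) \<Rightarrow> real^'m \<Rightarrow> real^'n" where
  "qa_pool D g P x = (THE q. q \<in> D \<and> (\<exists>c. g q = (\<Sum>i\<in>UNIV. x $ i *\<^sub>R g (P i)) + c *\<^sub>R ones_vec))"

end

theory Submission imports Defs begin

lemma dq:
  fixes f :: "real^'n \<Rightarrow> real" and gr :: "real^'n \<Rightarrow> real^'n"
  assumes conv: "convex D" and xD: "x \<in> D" and uD: "u \<in> D"
    and der: "\<forall>p\<in>D. (f has_derivative (\<lambda>h. gr p \<bullet> h)) (at p within D)"
  shows "((\<lambda>t. (f (x + t *\<^sub>R (u - x)) - f x) / t) \<longlongrightarrow> gr x \<bullet> (u - x)) (at_right 0)"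
proof -
  let ?c = "\<lambda>t::real. x + t *\<^sub>R (u - x)"
  have img: "?c ` {0..1} \<subseteq> D"
  proof
    fix y assume "y \<in> ?c ` {0..1}"
    then obtain t where t: "0 \<le> t" "t \<le> 1" "y = ?c t" by auto
    have "y = (1 - t) *\<^sub>R x + t *\<^sub>R u" using t by (simp add: algebra_simps)
    then show "y \<in> D" using conv xD uD t by (simp add: convex_alt)
  qed
  have dc: "(?c has_derivative (\<lambda>t. t *\<^sub>R (u-x))) (at 0 within {0..1})"
    by (auto intro!: derivative_eq_intros)
  have "((\<lambda>t. f (?c t)) has_derivative (\<lambda>t. gr (?c 0) \<bullet> (t *\<^sub>R (u-x)))) (at 0 within {0..1})"
    by (rule has_derivative_in_compose2[of D f "\<lambda>p h. gr p \<bullet> h", OF _ img _ dc]) (use der in auto)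
  then have "((\<lambda>t. f (?c t)) has_field_derivative (gr x \<bullet> (u-x))) (at 0 within {0..1})"
    unfolding has_field_derivative_def by (simp add: mult.commute[of _ "gr x \<bullet> (u - x)"])
  then have "((\<lambda>y. (f (?c y) - f (?c 0)) / (y - 0)) \<longlongrightarrow> gr x \<bullet> (u-x)) (at 0 within {0..1})"
    unfolding has_field_derivative_iff .
  then show ?thesis using at_within_Icc_at_right[of "0::real" 1] by simp
qed


lemma seg_in:
  fixes t :: real
  assumes "convex D" "x \<in> D" "u \<in> D" "0 \<le> t" "t \<le> 1"
  shows "x + t *\<^sub>R (u - x) \<in> D"
proof -
  have "x + t *\<^sub>R (u - x) = (1 - t) *\<^sub>R x + t *\<^sub>R u" by (simp add: algebra_simps)
  then show ?thesis using assms by (simp add: convex_alt)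
qed

lemma strict_imp_convex_on:
  assumes "strictly_convex_on D f" "convex D"
  shows "convex_on D f"
proof (rule convex_onI)
  fix t :: real and x y assume t: "0 < t" "t < 1" and xy: "x \<in> D" "y \<in> D"
  show "f ((1 - t) *\<^sub>R x + t *\<^sub>R y) \<le> (1 - t) * f x + t * f y"
  proof (cases "x = y")
    case True then show ?thesis by (simp add: algebra_simps flip: scaleR_add_left)
  next
    case False then show ?thesis using assms t xy unfolding strictly_convex_on_def by (simp add: less_imp_le)
  qed
qed (use assms in simp)

lemma tangent_ineq:
  fixes f :: "real^'n \<Rightarrow> real" and gr :: "real^'n \<Rightarrow> real^'n"
  assumes conv: "convex D" and cf: "convex_on D f" and xD: "x \<in> D" and uD: "u \<in> D"
    and der: "\<forall>p\<in>D. (f has_derivative (\<lambda>h. gr p \<bullet> h)) (at p within D)"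
  shows "f u \<ge> f x + gr x \<bullet> (u - x)"
proof -
  have lim: "((\<lambda>t. (f (x + t *\<^sub>R (u - x)) - f x) / t) \<longlongrightarrow> gr x \<bullet> (u - x)) (at_right 0)"
    by (rule dq[OF conv xD uD der])
  have ev: "eventually (\<lambda>t. (f (x + t *\<^sub>R (u - x)) - f x) / t \<le> f u - f x) (at_right (0::real))"
  proof (rule eventually_mono[OF eventually_at_right_real[OF zero_less_one]])
    fix t :: real assume "t \<in> {0<..<1}"
    then have t: "0 < t \<and> t < 1" by simp
    have "x + t *\<^sub>R (u - x) = (1 - t) *\<^sub>R x + t *\<^sub>R u" by (simp add: algebra_simps)
    moreover have "f ((1 - t) *\<^sub>R x + t *\<^sub>R u) \<le> (1 - t) * f x + t * f u"
      using cf t xD uD by (intro convex_onD) auto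
    ultimately have "f (x + t *\<^sub>R (u - x)) - f x \<le> t * (f u - f x)" by (simp add: algebra_simps)
    then show "(f (x + t *\<^sub>R (u - x)) - f x) / t \<le> f u - f x" using t by (simp add: divide_le_eq mult.commute)
  qed
  have "gr x \<bullet> (u - x) \<le> f u - f x"
    by (rule tendsto_upperbound[OF lim ev]) simp
  then show ?thesis by simp
qed

definition sv :: "(real^'n \<Rightarrow> 'n \<Rightarrow> real) \<Rightarrow> real^'n \<Rightarrow> real^'n" where
  "sv s x = (\<chi> k. s x k)"

lemma es_inner: "expected_score s p x = p \<bullet> sv s x"
  unfolding expected_score_def sv_def inner_vec_def by simp

lemma normal_ineq:
  fixes gr :: "real^'n \<Rightarrow> real^'n"
  assumes conv: "convex D" and pr: "proper_scoring_rule D s" and xD: "x \<in> D" and uD: "u \<in> D"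
    and der: "\<forall>p\<in>D. (score_G s has_derivative (\<lambda>h. gr p \<bullet> h)) (at p within D)"
  shows "(u - x) \<bullet> sv s x \<le> gr x \<bullet> (u - x)"
proof -
  let ?f = "score_G s"
  have lim: "((\<lambda>t. (?f (x + t *\<^sub>R (u - x)) - ?f x) / t) \<longlongrightarrow> gr x \<bullet> (u - x)) (at_right 0)"
    by (rule dq[OF conv xD uD der])
  have ev: "eventually (\<lambda>t. (?f (x + t *\<^sub>R (u - x)) - ?f x) / t \<ge> (u - x) \<bullet> sv s x) (at_right (0::real))"
  proof (rule eventually_mono[OF eventually_at_right_real[OF zero_less_one]])
    fix t :: real assume "t \<in> {0<..<1}"
    then have t: "0 < t \<and> t < 1" by simp
    let ?z = "x + t *\<^sub>R (u - x)"
    have zD: "?z \<in> D" using seg_in[OF conv xD uD, of t] t by simp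
    have "?f ?z \<ge> ?z \<bullet> sv s x" using pr zD xD unfolding proper_scoring_rule_def score_G_def es_inner by blast
    moreover have "?f x = x \<bullet> sv s x" unfolding score_G_def es_inner ..
    ultimately have "?f ?z - ?f x \<ge> t * ((u - x) \<bullet> sv s x)" by (simp add: algebra_simps inner_add_left)
    then show "(u - x) \<bullet> sv s x \<le> (?f ?z - ?f x) / t" using t by (simp add: le_divide_eq mult.commute)
  qed
  show ?thesis
    by (rule tendsto_lowerbound[OF lim ev]) simp
qed


lemma ones_inner: "ones_vec \<bullet> (y::real^'n) = (\<Sum>i\<in>UNIV. y $ i)"
  unfolding ones_vec_def inner_vec_def by simp

lemma ones_inner': "(y::real^'n) \<bullet> ones_vec = (\<Sum>i\<in>UNIV. y $ i)"
  unfolding ones_vec_def inner_vec_def by simp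

lemma simplex_sum: "x \<in> prob_simplex \<Longrightarrow> (\<Sum>i\<in>UNIV. x $ i) = 1"
  unfolding prob_simplex_def by simp

lemma perp_ones:
  fixes v x :: "real^'n"
  assumes sub: "D \<subseteq> prob_simplex" and ad: "aff_dim D = int CARD('n) - 1" and xD: "x \<in> D"
    and perp: "\<forall>p\<in>D. (p - x) \<bullet> v = 0"
  shows "v = ((v \<bullet> ones_vec) / CARD('n)) *\<^sub>R ones_vec"
proof -
  define T where "T = (\<lambda>p. p - x) ` D"
  have "x \<in> affine hull D" using xD by (simp add: hull_inc)
  then have dT: "int (dim T) = int CARD('n) - 1" using aff_dim_eq_dim_subtract[of x D] ad T_def by simp
  have oT: "\<And>t. t \<in> T \<Longrightarrow> ones_vec \<bullet> t = 0"
  proof -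
    fix t assume "t \<in> T"
    then obtain p where p: "p \<in> D" "t = p - x" unfolding T_def by auto
    have "p \<in> prob_simplex" "x \<in> prob_simplex" using sub p xD by auto
    then show "ones_vec \<bullet> t = 0" using p simplex_sum[of p] simplex_sum[of x]
      by (simp add: inner_diff_right ones_inner)
  qed
  have oo: "ones_vec \<bullet> (ones_vec :: real^'n) = CARD('n)"
    by (simp add: inner_vec_def ones_vec_def)
  have nsp: "ones_vec \<notin> span T"
  proof
    assume "ones_vec \<in> span T"
    then have "orthogonal ones_vec (ones_vec::real^'n)"
      by (rule orthogonal_to_span) (use oT in \<open>auto simp: orthogonal_def\<close>)
    then show False using oo by (simp add: orthogonal_def)
  qed
  have "dim (insert ones_vec T) = CARD('n)" using dT nsp dim_insert[of ones_vec T] by simp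
  then have spU: "span (insert ones_vec T) = UNIV" using dim_eq_full[of "insert ones_vec T"] by simp
  define c where "c = (v \<bullet> ones_vec) / CARD('n)"
  define v' where "v' = v - c *\<^sub>R ones_vec"
  have "orthogonal v' y" if "y \<in> insert ones_vec T" for y
  proof (cases "y = ones_vec")
    case True
    have "v' \<bullet> ones_vec = v \<bullet> ones_vec - c * CARD('n)" by (simp add: v'_def inner_diff_left oo)
    also have "\<dots> = 0" unfolding c_def by simp
    finally show ?thesis using True unfolding orthogonal_def by simp
  next
    case False
    then have "y \<in> T" using that by auto
    then obtain p where p: "p \<in> D" "y = p - x" unfolding T_def by auto
    have "v \<bullet> y = 0" using perp p by (simp add: inner_commute)
    moreover have "ones_vec \<bullet> y = 0" using oT \<open>y \<in> T\<close> by simp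
    ultimately show ?thesis unfolding orthogonal_def v'_def by (simp add: inner_diff_left)
  qed
  then have "orthogonal v' v'" by (intro orthogonal_to_span[of v' "insert ones_vec T"]) (auto simp: spU)
  then have "v' = 0" by (simp add: orthogonal_def)
  then show ?thesis unfolding v'_def c_def by simp
qed


lemma score_formula:
  fixes gr :: "real^'n \<Rightarrow> real^'n"
  assumes conv: "convex D" and sub: "D \<subseteq> prob_simplex" and ad: "aff_dim D = int CARD('n) - 1"
    and pr: "proper_scoring_rule D s" and cont: "\<forall>k. continuous_on D (\<lambda>p. s p k)"
    and cf: "convex_on D (score_G s)"
    and der: "\<forall>p\<in>D. (score_G s has_derivative (\<lambda>h. gr p \<bullet> h)) (at p within D)"
    and xD: "x \<in> D"
  shows "s x j = gr x $ j + score_G s x - x \<bullet> gr x"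
proof -
  let ?G = "score_G s"
  have perp: "\<forall>p\<in>D. (p - x) \<bullet> (sv s x - gr x) = 0"
  proof
    fix p assume pD: "p \<in> D"
    have le: "(p - x) \<bullet> sv s x \<le> gr x \<bullet> (p - x)" by (rule normal_ineq[OF conv pr xD pD der])
    have ev: "eventually (\<lambda>t. (p - x) \<bullet> sv s (x + t *\<^sub>R (p - x)) \<ge> gr x \<bullet> (p - x)) (at_right (0::real))"
    proof (rule eventually_mono[OF eventually_at_right_real[OF zero_less_one]])
      fix t :: real assume "t \<in> {0<..<1}"
      then have t: "0 < t" "t < 1" by auto
      define z where "z = x + t *\<^sub>R (p - x)"
      have zD: "z \<in> D" unfolding z_def using seg_in[OF conv xD pD, of t] t by simp
      have a1: "(p - z) \<bullet> sv s z \<le> gr z \<bullet> (p - z)" by (rule normal_ineq[OF conv pr zD pD der])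
      have a2: "(x - z) \<bullet> sv s z \<le> gr z \<bullet> (x - z)" by (rule normal_ineq[OF conv pr zD xD der])
      have pz: "p - z = (1 - t) *\<^sub>R (p - x)" unfolding z_def by (simp add: algebra_simps)
      have xz: "x - z = (- t) *\<^sub>R (p - x)" unfolding z_def by (simp add: algebra_simps)
      have "(1 - t) * ((p - x) \<bullet> sv s z) \<le> (1 - t) * (gr z \<bullet> (p - x))"
        using a1 unfolding pz by (simp add: inner_commute)
      then have b1: "(p - x) \<bullet> sv s z \<le> gr z \<bullet> (p - x)" using t by simp
      have "(- t) * ((p - x) \<bullet> sv s z) \<le> (- t) * (gr z \<bullet> (p - x))"
        using a2 unfolding xz by (simp add: inner_commute)
      then have b2: "(p - x) \<bullet> sv s z \<ge> gr z \<bullet> (p - x)" using t by simp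
      have c1: "?G z \<ge> ?G x + gr x \<bullet> (z - x)" by (rule tangent_ineq[OF conv cf xD zD der])
      have c2: "?G x \<ge> ?G z + gr z \<bullet> (x - z)" by (rule tangent_ineq[OF conv cf zD xD der])
      have zx: "z - x = t *\<^sub>R (p - x)" unfolding z_def by simp
      have "t * (gr x \<bullet> (p - x)) \<le> t * (gr z \<bullet> (p - x))"
        using c1 c2 unfolding zx xz by (simp add: algebra_simps)
      then have "gr x \<bullet> (p - x) \<le> gr z \<bullet> (p - x)" using t by simp
      with b2 show "gr x \<bullet> (p - x) \<le> (p - x) \<bullet> sv s (x + t *\<^sub>R (p - x))" unfolding z_def by simp
    qed
    have cs: "continuous_on D (\<lambda>z. (p - x) \<bullet> sv s z)"
      unfolding sv_def using cont by (intro continuous_intros) auto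
    have lim0: "((\<lambda>t::real. x + t *\<^sub>R (p - x)) \<longlongrightarrow> x) (at_right 0)"
      by (rule tendsto_eq_intros) (auto intro!: tendsto_eq_intros)
    have evD: "eventually (\<lambda>t::real. x + t *\<^sub>R (p - x) \<in> D) (at_right 0)"
      by (rule eventually_mono[OF eventually_at_right_real[OF zero_less_one]])
        (use seg_in[OF conv xD pD] in auto)
    have lim: "((\<lambda>t. (p - x) \<bullet> sv s (x + t *\<^sub>R (p - x))) \<longlongrightarrow> (p - x) \<bullet> sv s x) (at_right (0::real))"
      by (rule continuous_on_tendsto_compose[OF cs lim0 xD evD])
    have "gr x \<bullet> (p - x) \<le> (p - x) \<bullet> sv s x"
      by (rule tendsto_lowerbound[OF lim ev]) simp
    with le show "(p - x) \<bullet> (sv s x - gr x) = 0" by (simp add: inner_diff_right inner_commute)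
  qed
  define c where "c = ((sv s x - gr x) \<bullet> ones_vec) / CARD('n)"
  have v: "sv s x - gr x = c *\<^sub>R ones_vec"
    unfolding c_def by (rule perp_ones[OF sub ad xD perp])
  have "?G x = x \<bullet> sv s x" unfolding score_G_def es_inner ..
  also have "sv s x = gr x + c *\<^sub>R ones_vec" using v by (simp add: algebra_simps)
  finally have Gx: "?G x = x \<bullet> gr x + c" using sub xD simplex_sum[of x]
    by (auto simp: inner_add_right ones_inner')
  have "s x j = sv s x $ j" unfolding sv_def by simp
  also have "\<dots> = gr x $ j + c" using v by (simp add: algebra_simps ones_vec_def vec_eq_iff)
  finally show ?thesis using Gx by simp
qed


lemma ones_diff_zero:
  assumes "p \<in> prob_simplex" "q \<in> prob_simplex"
  shows "ones_vec \<bullet> (p - q) = 0"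
  using assms simplex_sum[of p] simplex_sum[of q] by (simp add: inner_diff_right ones_inner)

lemma pool_prop:
  fixes f :: "real^'n \<Rightarrow> real" and gr :: "real^'n \<Rightarrow> real^'n" and P :: "'m::finite \<Rightarrow> real^'n"
  assumes conv: "convex D" and sub: "D \<subseteq> prob_simplex" and sc: "strictly_convex_on D f"
    and der: "\<forall>p\<in>D. (f has_derivative (\<lambda>h. gr p \<bullet> h)) (at p within D)"
    and cexp: "convex_exposure D gr" and PD: "\<forall>i. P i \<in> D" and xs: "x \<in> prob_simplex"
  shows "qa_pool D gr P x \<in> D \<and> (\<exists>c. gr (qa_pool D gr P x) = (\<Sum>i\<in>UNIV. x $ i *\<^sub>R gr (P i)) + c *\<^sub>R ones_vec)"
proof -
  define Y where "Y = (\<Sum>i\<in>UNIV. x $ i *\<^sub>R gr (P i))"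
  have cf: "convex_on D f" by (rule strict_imp_convex_on[OF sc conv])
  have ex: "\<exists>q. q \<in> D \<and> (\<exists>c. gr q = Y + c *\<^sub>R ones_vec)"
  proof -
    have "Y \<in> {gr p + c *\<^sub>R ones_vec | p c. p \<in> D}"
      unfolding Y_def
    proof (rule convex_sum)
      show "convex {gr p + c *\<^sub>R ones_vec | p c. p \<in> D}" using cexp unfolding convex_exposure_def .
      show "(\<Sum>i\<in>UNIV. x $ i) = 1" using xs by (rule simplex_sum)
      show "\<And>i. i \<in> UNIV \<Longrightarrow> 0 \<le> x $ i" using xs unfolding prob_simplex_def by auto
      show "\<And>i. i \<in> UNIV \<Longrightarrow> gr (P i) \<in> {gr p + c *\<^sub>R ones_vec | p c. p \<in> D}"
        using PD by (metis (mono_tags, lifting) add.right_neutral mem_Collect_eq scale_zero_left)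
    qed simp
    then obtain p c where "p \<in> D" "Y = gr p + c *\<^sub>R ones_vec" by blast
    then show ?thesis by (intro exI[of _ p] conjI exI[of _ "-c"]) auto
  qed
  have un: "q1 = q2" if q1: "q1 \<in> D" "gr q1 = Y + c1 *\<^sub>R ones_vec"
    and q2: "q2 \<in> D" "gr q2 = Y + c2 *\<^sub>R ones_vec" for q1 q2 c1 c2
  proof (rule ccontr)
    assume ne: "q1 \<noteq> q2"
    have o: "ones_vec \<bullet> (q2 - q1) = 0" using sub q1 q2 ones_diff_zero by auto
    have i1: "gr q1 \<bullet> (q2 - q1) = Y \<bullet> (q2 - q1)" using q1 o by (simp add: inner_add_left)
    have i2: "gr q2 \<bullet> (q1 - q2) = - (Y \<bullet> (q2 - q1))"
    proof -
      have "gr q2 \<bullet> (q1 - q2) = - (gr q2 \<bullet> (q2 - q1))" by (simp add: inner_diff_right)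
      also have "gr q2 \<bullet> (q2 - q1) = Y \<bullet> (q2 - q1)" using q2 o by (simp add: inner_add_left)
      finally show ?thesis .
    qed
    have t1: "f q2 \<ge> f q1 + gr q1 \<bullet> (q2 - q1)" by (rule tangent_ineq[OF conv cf q1(1) q2(1) der])
    have t2: "f q1 \<ge> f q2 + gr q2 \<bullet> (q1 - q2)" by (rule tangent_ineq[OF conv cf q2(1) q1(1) der])
    have eq: "f q2 = f q1 + Y \<bullet> (q2 - q1)" using t1 t2 i1 i2 by simp
    define m where "m = (1 - 1/2) *\<^sub>R q1 + (1/2::real) *\<^sub>R q2"
    have mD: "m \<in> D" unfolding m_def using conv q1 q2 unfolding convex_alt
      by (metis (no_types, lifting) divide_le_eq_1_pos le_divide_eq_1_pos one_le_numeral zero_le_divide_1_iff zero_le_numeral zero_less_numeral)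
    have t3: "f m \<ge> f q1 + gr q1 \<bullet> (m - q1)" by (rule tangent_ineq[OF conv cf q1(1) mD der])
    have "m - q1 = (1/2::real) *\<^sub>R (q2 - q1)" unfolding m_def by (simp add: vec_eq_iff field_simps)
    then have "gr q1 \<bullet> (m - q1) = (1/2) * (Y \<bullet> (q2 - q1))" using i1 by simp
    then have "f m \<ge> f q1 + (1/2) * (Y \<bullet> (q2 - q1))" using t3 by simp
    then have ge: "f m \<ge> (1 - 1/2) * f q1 + (1/2) * f q2" unfolding eq by (simp add: field_simps)
    have "f m < (1 - 1/2) * f q1 + (1/2) * f q2"
      using sc ne q1 q2 unfolding strictly_convex_on_def m_def
      by (metis (no_types, lifting) divide_less_eq_1_pos less_numeral_extra(1) one_less_numeral_iff semiring_norm(76) zero_less_divide_iff zero_less_numeral)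
    with ge show False by simp
  qed
  have "\<exists>!q. q \<in> D \<and> (\<exists>c. gr q = Y + c *\<^sub>R ones_vec)" using ex un by blast
  then have "qa_pool D gr P x \<in> D \<and> (\<exists>c. gr (qa_pool D gr P x) = Y + c *\<^sub>R ones_vec)"
    unfolding qa_pool_def Y_def[symmetric] by (rule theI')
  then show ?thesis unfolding Y_def .
qed


definition Gs :: "(real^'n) set \<Rightarrow> (real^'n \<Rightarrow> real) \<Rightarrow> real^'n \<Rightarrow> real" where
  "Gs D f y = (SUP q\<in>D. y \<bullet> q - f q)"

lemma simplex_norm: "q \<in> prob_simplex \<Longrightarrow> norm q \<le> 1"
proof -
  assume q: "q \<in> prob_simplex"
  have "norm q \<le> (\<Sum>i\<in>UNIV. \<bar>q $ i\<bar>)" by (rule norm_le_l1_cart)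
  also have "\<dots> = (\<Sum>i\<in>UNIV. q $ i)" using q unfolding prob_simplex_def by simp
  also have "\<dots> = 1" using q by (rule simplex_sum)
  finally show ?thesis .
qed

lemma Gs_bdd:
  fixes f :: "real^'n \<Rightarrow> real" and gr :: "real^'n \<Rightarrow> real^'n"
  assumes conv: "convex D" and sub: "D \<subseteq> prob_simplex" and cf: "convex_on D f"
    and der: "\<forall>p\<in>D. (f has_derivative (\<lambda>h. gr p \<bullet> h)) (at p within D)" and p0: "p0 \<in> D"
  shows "bdd_above ((\<lambda>q. y \<bullet> q - f q) ` D)"
proof (rule bdd_aboveI2)
  fix q assume qD: "q \<in> D"
  have "f q \<ge> f p0 + gr p0 \<bullet> (q - p0)" by (rule tangent_ineq[OF conv cf p0 qD der])
  then have "y \<bullet> q - f q \<le> (y - gr p0) \<bullet> q - f p0 + gr p0 \<bullet> p0" by (simp add: inner_diff_left inner_diff_right)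
  also have "(y - gr p0) \<bullet> q \<le> norm (y - gr p0) * norm q" by (rule norm_cauchy_schwarz)
  also have "\<dots> \<le> norm (y - gr p0)" using simplex_norm[of q] qD sub
    by (simp add: mult_left_le subset_iff)
  finally show "y \<bullet> q - f q \<le> norm (y - gr p0) - f p0 + gr p0 \<bullet> p0" by simp
qed

lemma Gs_upper:
  fixes f :: "real^'n \<Rightarrow> real" and gr :: "real^'n \<Rightarrow> real^'n"
  assumes conv: "convex D" and sub: "D \<subseteq> prob_simplex" and cf: "convex_on D f"
    and der: "\<forall>p\<in>D. (f has_derivative (\<lambda>h. gr p \<bullet> h)) (at p within D)" and uD: "u \<in> D"
  shows "y \<bullet> u - f u \<le> Gs D f y"
  unfolding Gs_def by (rule cSUP_upper[OF uD Gs_bdd[OF conv sub cf der uD]])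

lemma Gs_at:
  fixes f :: "real^'n \<Rightarrow> real" and gr :: "real^'n \<Rightarrow> real^'n"
  assumes conv: "convex D" and sub: "D \<subseteq> prob_simplex" and cf: "convex_on D f"
    and der: "\<forall>p\<in>D. (f has_derivative (\<lambda>h. gr p \<bullet> h)) (at p within D)" and qD: "q \<in> D"
    and gq: "gr q = Y + c *\<^sub>R ones_vec"
  shows "Gs D f Y = Y \<bullet> q - f q"
  unfolding Gs_def
proof (rule cSup_eq_maximum)
  show "Y \<bullet> q - f q \<in> (\<lambda>q. Y \<bullet> q - f q) ` D" using qD by auto
  fix z assume "z \<in> (\<lambda>q. Y \<bullet> q - f q) ` D"
  then obtain u where uD: "u \<in> D" and z: "z = Y \<bullet> u - f u" by auto
  have t: "f u \<ge> f q + gr q \<bullet> (u - q)" by (rule tangent_ineq[OF conv cf qD uD der])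
  have "ones_vec \<bullet> (u - q) = 0" using sub uD qD ones_diff_zero by auto
  then have "gr q \<bullet> (u - q) = Y \<bullet> (u - q)" using gq by (simp add: inner_add_left)
  then show "z \<le> Y \<bullet> q - f q" using t z by (simp add: inner_diff_right)
qed

lemma Gs_convex:
  fixes f :: "real^'n \<Rightarrow> real" and gr :: "real^'n \<Rightarrow> real^'n"
  assumes conv: "convex D" and sub: "D \<subseteq> prob_simplex" and cf: "convex_on D f"
    and der: "\<forall>p\<in>D. (f has_derivative (\<lambda>h. gr p \<bullet> h)) (at p within D)" and ne: "D \<noteq> {}"
  shows "convex_on UNIV (Gs D f)"
proof (rule convex_onI)
  fix t :: real and a b :: "real^'n" assume t: "0 < t" "t < 1"
  show "Gs D f ((1 - t) *\<^sub>R a + t *\<^sub>R b) \<le> (1 - t) * Gs D f a + t * Gs D f b"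
    unfolding Gs_def[of D f "(1 - t) *\<^sub>R a + t *\<^sub>R b"]
  proof (rule cSUP_least[OF ne])
    fix q assume qD: "q \<in> D"
    have "a \<bullet> q - f q \<le> Gs D f a" by (rule Gs_upper[OF conv sub cf der qD])
    moreover have "b \<bullet> q - f q \<le> Gs D f b" by (rule Gs_upper[OF conv sub cf der qD])
    ultimately have "(1 - t) * (a \<bullet> q - f q) + t * (b \<bullet> q - f q) \<le> (1 - t) * Gs D f a + t * Gs D f b"
      using t by (intro add_mono mult_left_mono) auto
    then show "((1 - t) *\<^sub>R a + t *\<^sub>R b) \<bullet> q - f q \<le> (1 - t) * Gs D f a + t * Gs D f b"
      by (simp add: inner_add_left algebra_simps)
  qed
qed simp

lemma Gs_cont:
  fixes f :: "real^'n \<Rightarrow> real" and gr :: "real^'n \<Rightarrow> real^'n"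
  assumes conv: "convex D" and sub: "D \<subseteq> prob_simplex" and cf: "convex_on D f"
    and der: "\<forall>p\<in>D. (f has_derivative (\<lambda>h. gr p \<bullet> h)) (at p within D)" and ne: "D \<noteq> {}"
  shows "continuous_on UNIV (Gs D f)"
  by (rule convex_on_continuous[OF open_UNIV Gs_convex[OF conv sub cf der ne]])

lemma compact_simplex: "compact (prob_simplex :: (real^'k) set)"
  unfolding compact_eq_bounded_closed
proof
  show "bounded (prob_simplex :: (real^'k) set)"
    using simplex_norm by (auto simp: bounded_iff)
  have "prob_simplex = {x::real^'k. \<forall>i. 0 \<le> x $ i} \<inter> {x. (\<Sum>i\<in>UNIV. x $ i) = 1}"
    unfolding prob_simplex_def by auto
  moreover have "closed {x::real^'k. (\<Sum>i\<in>UNIV. x $ i) = 1}"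
    by (intro closed_Collect_eq continuous_intros)
  ultimately show "closed (prob_simplex :: (real^'k) set)"
    using closed_positive_orthant by (metis closed_Int)
qed


theorem corollary5p4:
  fixes D :: "(real^'n) set" and s :: "real^'n \<Rightarrow> 'n \<Rightarrow> real"
    and g :: "real^'n \<Rightarrow> real^'n" and P :: "'m::finite \<Rightarrow> real^'n"
    and M :: "'a measure" and w :: "'a \<Rightarrow> real^'m" and j :: 'n
  assumes "forecast_domain D"
    and "proper_scoring_rule D s"
    and "\<forall>k. continuous_on D (\<lambda>p. s p k)"
    and "is_exposure D s g"
    and "convex_exposure D g"
    and "\<forall>i. P i \<in> D"
    and "prob_space M"
    and "w \<in> borel_measurable M"
    and "\<forall>\<omega>\<in>space M. w \<omega> \<in> prob_simplex"
  shows "s (qa_pool D g P (integral\<^sup>L M w)) j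
           \<ge> integral\<^sup>L M (\<lambda>\<omega>. s (qa_pool D g P (w \<omega>)) j)"
proof -
  interpret prob_space M by (rule assms(7))
  let ?G = "score_G s"
  have conv: "convex D" and sub: "D \<subseteq> prob_simplex" and ad: "aff_dim D = int CARD('n) - 1"
    using assms(1) unfolding forecast_domain_def by auto
  have sc: "strictly_convex_on D ?G" and der: "\<forall>p\<in>D. (?G has_derivative (\<lambda>h. g p \<bullet> h)) (at p within D)"
    using assms(4) unfolding is_exposure_def by auto
  have cf: "convex_on D ?G" by (rule strict_imp_convex_on[OF sc conv])
  have PD: "\<forall>i. P i \<in> D" by (rule assms(6))
  have ne: "D \<noteq> {}" using PD by auto
  define Y where "Y x = (\<Sum>i\<in>UNIV. x $ i *\<^sub>R g (P i))" for x :: "real^'m"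
  define h where "h x = Y x $ j - Gs D ?G (Y x)" for x
  have pool: "qa_pool D g P x \<in> D \<and> (\<exists>c. g (qa_pool D g P x) = Y x + c *\<^sub>R ones_vec)"
    if "x \<in> prob_simplex" for x
    unfolding Y_def by (rule pool_prop[OF conv sub sc der assms(5) PD that])
  have key: "s (qa_pool D g P x) j = h x" if xs: "x \<in> prob_simplex" for x
  proof -
    define q where "q = qa_pool D g P x"
    obtain c where qD: "q \<in> D" and gq: "g q = Y x + c *\<^sub>R ones_vec" using pool[OF xs] unfolding q_def by auto
    have sf: "s q j = g q $ j + ?G q - q \<bullet> g q"
      by (rule score_formula[OF conv sub ad assms(2) assms(3) cf der qD])
    have gs: "Gs D ?G (Y x) = Y x \<bullet> q - ?G q" by (rule Gs_at[OF conv sub cf der qD gq])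
    have qs: "q \<in> prob_simplex" using qD sub by auto
    have "q \<bullet> g q = q \<bullet> Y x + c" using gq simplex_sum[OF qs] by (simp add: inner_add_right ones_inner')
    moreover have "g q $ j = Y x $ j + c" using gq by (simp add: ones_vec_def)
    ultimately show ?thesis using sf gs unfolding q_def[symmetric] h_def by (simp add: inner_commute)
  qed
  have Ycont: "continuous_on UNIV Y" unfolding Y_def by (intro continuous_intros)
  have hcont: "continuous_on UNIV h" unfolding h_def
    by (intro continuous_intros continuous_on_compose2[OF Gs_cont[OF conv sub cf der ne] Ycont]) (auto intro: Ycont)
  have wnorm: "\<forall>\<omega>\<in>space M. norm (w \<omega>) \<le> 1" using assms(9) simplex_norm by auto
  have wint: "integrable M w"
    by (rule integrable_const_bound[of _ 1]) (use wnorm assms(8) in auto)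
  define wh where "wh = integral\<^sup>L M w"
  have comp: "wh $ i = (\<integral>\<omega>. w \<omega> $ i \<partial>M)" for i
    unfolding wh_def by (rule integral_bounded_linear[OF bounded_linear_vec_nth wint, symmetric])
  have cint: "integrable M (\<lambda>\<omega>. w \<omega> $ i)" for i
    by (rule integrable_bounded_linear[OF bounded_linear_vec_nth wint])
  have whs: "wh \<in> prob_simplex"
  proof -
    have "0 \<le> wh $ i" for i unfolding comp
      by (rule Bochner_Integration.integral_nonneg) (use assms(9) in \<open>auto simp: prob_simplex_def\<close>)
    moreover have "(\<Sum>i\<in>UNIV. wh $ i) = 1"
    proof -
      have "(\<Sum>i\<in>UNIV. wh $ i) = (\<integral>\<omega>. (\<Sum>i\<in>UNIV. w \<omega> $ i) \<partial>M)"
        unfolding comp using Bochner_Integration.integral_sum[where I=UNIV and M=M and f="\<lambda>i \<omega>. w \<omega> $ i", OF cint] by simp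
      also have "\<dots> = (\<integral>\<omega>. 1 \<partial>M)"
        by (rule Bochner_Integration.integral_cong) (use assms(9) simplex_sum in auto)
      also have "\<dots> = 1" by (simp add: prob_space)
      finally show ?thesis .
    qed
    ultimately show ?thesis unfolding prob_simplex_def by auto
  qed
  define qh where "qh = qa_pool D g P wh"
  obtain ch where qhD: "qh \<in> D" and gqh: "g qh = Y wh + ch *\<^sub>R ones_vec" using pool[OF whs] unfolding qh_def by auto
  define a where "a = (\<chi> i. g (P i) \<bullet> (axis j 1 - qh))"
  have Aeq: "Y x $ j - Y x \<bullet> qh = x \<bullet> a" for x
  proof -
    have "Y x $ j - Y x \<bullet> qh = Y x \<bullet> (axis j 1 - qh)" by (simp add: inner_diff_right inner_axis)
    also have "\<dots> = (\<Sum>i\<in>UNIV. x $ i * (g (P i) \<bullet> (axis j 1 - qh)))"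
      unfolding Y_def by (simp add: inner_sum_left)
    also have "\<dots> = x \<bullet> a" unfolding a_def inner_vec_def by simp
    finally show ?thesis .
  qed
  have upper: "h x \<le> x \<bullet> a + ?G qh" for x
  proof -
    have "Y x \<bullet> qh - ?G qh \<le> Gs D ?G (Y x)" by (rule Gs_upper[OF conv sub cf der qhD])
    then show ?thesis unfolding h_def using Aeq[of x] by simp
  qed
  have atwh: "h wh = wh \<bullet> a + ?G qh"
  proof -
    have "Gs D ?G (Y wh) = Y wh \<bullet> qh - ?G qh" by (rule Gs_at[OF conv sub cf der qhD gqh])
    then show ?thesis unfolding h_def using Aeq[of wh] by simp
  qed
  have hmeas: "(\<lambda>\<omega>. h (w \<omega>)) \<in> borel_measurable M"
    using measurable_compose[OF assms(8) borel_measurable_continuous_onI[OF hcont]] by (simp add: o_def)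
  have "compact (h ` prob_simplex)"
    by (rule compact_continuous_image[OF continuous_on_subset[OF hcont] compact_simplex]) simp
  then obtain B where B: "\<forall>y\<in>h ` prob_simplex. norm y \<le> B" using compact_imp_bounded bounded_iff by metis
  have hint: "integrable M (\<lambda>\<omega>. h (w \<omega>))"
    by (rule integrable_const_bound[of _ B]) (use B assms(9) hmeas in auto)
  have aint: "integrable M (\<lambda>\<omega>. w \<omega> \<bullet> a + ?G qh)"
    using wint by auto
  have "integral\<^sup>L M (\<lambda>\<omega>. s (qa_pool D g P (w \<omega>)) j) = integral\<^sup>L M (\<lambda>\<omega>. h (w \<omega>))"
    by (rule Bochner_Integration.integral_cong) (use key assms(9) in auto)
  also have "\<dots> \<le> integral\<^sup>L M (\<lambda>\<omega>. w \<omega> \<bullet> a + ?G qh)"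
    by (rule Bochner_Integration.integral_mono[OF hint aint upper])
  also have "\<dots> = wh \<bullet> a + ?G qh"
    using wint unfolding wh_def by (simp add: prob_space)
  also have "\<dots> = s (qa_pool D g P (integral\<^sup>L M w)) j"
    using key[OF whs] atwh unfolding wh_def by simp
  finally show ?thesis .
qed

end
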